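(* Let $A$ be a real $d\times d$ matrix and $\Sigma$ a real symmetric positive definite $d\times d$ matrix such that $V:=\Sigma-A\Sigma A^T$ is positive definite and $A\Sigma=\Sigma A^T$. Consider the Markov chain $\mathbf{X}_t=A\mathbf{X}_{t-1}+\boldsymbol{\xi}_t$ on $\mathbb{R}^d$ with $\boldsymbol{\xi}_t$ i.i.d. $\mathcal{N}(\mathbf{0},V)$, whose stationary distribution is $\mathcal{N}(\mathbf{0},\Sigma)$. Write the symmetric matrix $\Sigma^{-1/2}A\Sigma^{1/2}=PDP^T$ with $P^TP=I$ and $D=\operatorname{diag}(\lambda_1,\dots,\lambda_d)$ (the eigenvalues of $A$). Then the chi-square distance after $l$ steps, starting from $\mathbf{x}\in\mathbb{R}^d$, is $$\chi_{\mathbf{x}}^2(l)=\frac{e^{\sum_{i=1}^dz_i^2\lambda_i^{2l}/(1+\lambda_i^{2l})}}{\sqrt{\prod_{i=1}^d(1-\lambda_i^{4l})}}-1,\qquad\text{where }\mathbf{z}=P^T\Sigma^{-1/2}\mathbf{x}.$$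
   Context: $\Sigma^{1/2}$ is the symmetric positive definite square root. The chi-square distance is $\chi_{\mathbf{x}}^2(l)=\int_{\mathbb{R}^d}\frac{[K^l(\mathbf{x},\mathbf{y})-\pi(\mathbf{y})]^2}{\pi(\mathbf{y})}d\mathbf{y}$, where $K^l(\mathbf{x},\cdot)$ is the $l$-step transition density of the chain and $\pi$ the $\mathcal{N}(\mathbf{0},\Sigma)$ density. *)

theory Defs
  imports "HOL-Analysis.Analysis"
begin

definition posdef :: "real^'n^'n \<Rightarrow> bool" where
  "posdef M \<longleftrightarrow> transpose M = M \<and> (\<forall>x. x \<noteq> 0 \<longrightarrow> x \<bullet> (M *v x) > 0)"

definition spd_sqrt :: "real^'n^'n \<Rightarrow> real^'n^'n" where
  "spd_sqrt S = (THE R. posdef R \<and> R ** R = S)"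

definition diag_mat :: "('n \<Rightarrow> real) \<Rightarrow> real^'n^'n" where
  "diag_mat l = (\<chi> i j. if i = j then l i else 0)"

definition gauss_density :: "real^'n^'n \<Rightarrow> real^'n \<Rightarrow> real^'n \<Rightarrow> real" where
  "gauss_density S m y =
     exp (-(1/2) * ((y - m) \<bullet> (matrix_inv S *v (y - m)))) / sqrt ((2 * pi) ^ CARD('n) * det S)"

text \<open>l-step transition density K^l(x,y) of the chain X_t = A X_(t-1) + xi_t, xi_t ~ N(0,V),
  via Chapman-Kolmogorov. Only l >= 1 is meaningful (K^0 has no density); value 0 at l = 0 is
  an unused convention.\<close>
fun trans_dens :: "real^'n^'n \<Rightarrow> real^'n^'n \<Rightarrow> nat \<Rightarrow> real^'n \<Rightarrow> real^'n \<Rightarrow> real" where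
  "trans_dens A V 0 x y = 0"
| "trans_dens A V (Suc 0) x y = gauss_density V (A *v x) y"
| "trans_dens A V (Suc (Suc l)) x y =
     (LINT z|lborel. trans_dens A V (Suc l) x z * gauss_density V (A *v z) y)"

text \<open>Chi-square distance (as an extended nonnegative real, the integrand being nonnegative).\<close>
definition chi_sq :: "real^'n^'n \<Rightarrow> real^'n^'n \<Rightarrow> real^'n^'n \<Rightarrow> real^'n \<Rightarrow> nat \<Rightarrow> ennreal" where
  "chi_sq A V S x l =
     (\<integral>\<^sup>+ y. ennreal ((trans_dens A V l x y - gauss_density S 0 y)^2 / gauss_density S 0 y) \<partial>lborel)"

end

theory Submission
  imports Defs "HOL-Probability.Probability"
begin

lemma sym_inner:
  fixes M :: "real^'n^'n"
  assumes "transpose M = M"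
  shows "(M *v x) \<bullet> y = x \<bullet> (M *v y)"
proof -
  have "(M *v x) \<bullet> y = (x v* transpose M) \<bullet> y" by simp
  also have "\<dots> = x \<bullet> (transpose M *v y)" by (rule dot_lmul_matrix)
  finally show ?thesis using assms by simp
qed

lemma quad_scale:
  fixes M :: "real^'n^'n"
  shows "(c *\<^sub>R x) \<bullet> (M *v (c *\<^sub>R x)) = c^2 * (x \<bullet> (M *v x))"
  by (simp add: matrix_vector_mult_scaleR power2_eq_square)

lemma eig_exists:
  fixes M :: "real^'n^'n"
  assumes sym: "transpose M = M" and W: "subspace W" and x0: "x0 \<in> W" "x0 \<noteq> 0"
    and inv: "\<And>x. x \<in> W \<Longrightarrow> M *v x \<in> W"
  shows "\<exists>v\<in>W. norm v = 1 \<and> M *v v = (v \<bullet> (M *v v)) *\<^sub>R v"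
proof -
  let ?S = "W \<inter> sphere 0 1"
  let ?f = "\<lambda>x. x \<bullet> (M *v x)"
  have cS: "compact ?S"
    by (intro closed_Int_compact closed_subspace W compact_sphere)
  moreover have "(1 / norm x0) *\<^sub>R x0 \<in> ?S"
    using x0 W by (simp add: subspace_scale)
  hence neS: "?S \<noteq> {}" by blast
  have ctS: "continuous_on ?S ?f"
  proof -
    have "continuous_on UNIV (\<lambda>x. M *v x)"
      by (simp add: linear_continuous_on linear_linear matrix_vector_mul_linear)
    hence "continuous_on UNIV ?f" by (intro continuous_on_inner continuous_on_id)
    thus ?thesis by (rule continuous_on_subset) simp
  qed
  obtain v where v: "v \<in> ?S" and vmax: "\<And>y. y \<in> ?S \<Longrightarrow> ?f y \<le> ?f v"
    using continuous_attains_sup[OF cS neS ctS] by blast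
  define l where "l = ?f v"
  have nv: "norm v = 1" and vW: "v \<in> W" using v by auto
  have vv: "v \<bullet> v = 1" using nv by (simp add: dot_square_norm)
  have bound: "?f x \<le> l * (x \<bullet> x)" if xW: "x \<in> W" for x
  proof (cases "x = 0")
    case True then show ?thesis by simp
  next
    case False
    have "(1 / norm x) *\<^sub>R x \<in> ?S" using xW False W by (simp add: subspace_scale)
    hence "?f ((1 / norm x) *\<^sub>R x) \<le> l" using vmax l_def by blast
    hence "(1/norm x)^2 * ?f x \<le> l" by (simp only: quad_scale)
    moreover have "(x \<bullet> x) = (norm x)^2" by (simp add: dot_square_norm)
    moreover have "norm x > 0" using False by simp
    ultimately show ?thesis by (simp add: field_simps power2_eq_square)
  qed
  define w where "w = M *v v - l *\<^sub>R v"
  have wW: "w \<in> W" unfolding w_def using inv[OF vW] vW W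
    by (simp add: subspace_diff subspace_scale)
  have vw: "v \<bullet> w = 0" unfolding w_def l_def using vv
    by (simp add: inner_diff_right)
  have wMv: "w \<bullet> (M *v v) = w \<bullet> w"
  proof -
    have "M *v v = w + l *\<^sub>R v" unfolding w_def by simp
    hence "w \<bullet> (M *v v) = w \<bullet> w + l * (w \<bullet> v)" by (simp add: inner_add_right)
    thus ?thesis using vw by (simp add: inner_commute)
  qed
  have vMw: "v \<bullet> (M *v w) = w \<bullet> w"
    using wMv sym_inner[OF sym, of v w] by (simp add: inner_commute)
  define a where "a = w \<bullet> w"
  define K where "K = l * a - ?f w"
  have key: "2 * t * a \<le> t^2 * K" for t
  proof -
    have "v + t *\<^sub>R w \<in> W" using vW wW W by (simp add: subspace_add subspace_scale)
    hence b: "?f (v + t *\<^sub>R w) \<le> l * ((v + t *\<^sub>R w) \<bullet> (v + t *\<^sub>R w))" by (rule bound)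
    have e1: "?f (v + t *\<^sub>R w) = l + 2 * t * a + t^2 * ?f w"
      by (simp add: matrix_vector_right_distrib matrix_vector_mult_scaleR inner_add_left inner_add_right
          l_def a_def wMv vMw power2_eq_square algebra_simps)
    have e2: "(v + t *\<^sub>R w) \<bullet> (v + t *\<^sub>R w) = 1 + t^2 * a"
      using vv vw by (simp add: inner_add_left inner_add_right a_def power2_eq_square inner_commute algebra_simps)
    show ?thesis using b unfolding e1 e2 K_def by (simp add: algebra_simps)
  qed
  have "a = 0"
  proof (rule ccontr)
    assume "a \<noteq> 0"
    hence apos: "a > 0" unfolding a_def by simp
    define t where "t = a / (\<bar>K\<bar> + 1)"
    have tpos: "t > 0" using apos by (simp add: t_def add_pos_nonneg)
    have "2 * t * a \<le> t^2 * K" by (rule key)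
    hence "2 * a \<le> t * K" using tpos by (simp add: power2_eq_square)
    also have "t * K \<le> t * \<bar>K\<bar>" using tpos by (simp add: mult_left_mono)
    also have "t * \<bar>K\<bar> < a" using apos unfolding t_def by (simp add: field_simps)
    finally show False using apos by simp
  qed
  hence "w = 0" unfolding a_def by simp
  hence "M *v v = l *\<^sub>R v" unfolding w_def by simp
  thus ?thesis using vW nv l_def by blast
qed

lemma eig_set:
  fixes M :: "real^'n^'n"
  assumes sym: "transpose M = M"
  shows "k \<le> CARD('n) \<Longrightarrow> \<exists>B. finite B \<and> card B = k \<and> pairwise orthogonal B \<and>
            (\<forall>b\<in>B. norm b = 1 \<and> (\<exists>c. M *v b = c *\<^sub>R b))"
proof (induction k)
  case 0
  show ?case by (rule exI[of _ "{}"]) simp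
next
  case (Suc k)
  then obtain B where B: "finite B" "card B = k" "pairwise orthogonal B"
    "\<forall>b\<in>B. norm b = 1 \<and> (\<exists>c. M *v b = c *\<^sub>R b)" by auto
  have "dim B \<le> card B" using B(1) by (rule dim_le_card')
  also have "\<dots> < DIM(real^'n)" using B(2) Suc.prems by simp
  finally have dB: "dim B < DIM(real^'n)" .
  obtain x where x: "x \<noteq> 0" "\<And>y. y \<in> span B \<Longrightarrow> orthogonal x y"
    using orthogonal_to_subspace_exists[OF dB] by metis
  define W where "W = {y::real^'n. \<forall>b\<in>B. b \<bullet> y = 0}"
  have sW: "subspace W" unfolding W_def subspace_def
    by (simp add: inner_add_right)
  have xW: "x \<in> W" unfolding W_def using x(2) span_base
    by (force simp: orthogonal_def inner_commute)
  have invW: "M *v y \<in> W" if "y \<in> W" for y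
  proof -
    have "b \<bullet> (M *v y) = 0" if bB: "b \<in> B" for b
    proof -
      obtain c where c: "M *v b = c *\<^sub>R b" using B(4) bB by blast
      have "b \<bullet> (M *v y) = (M *v b) \<bullet> y" using sym_inner[OF sym, of b y] by simp
      also have "\<dots> = c * (b \<bullet> y)" using c by simp
      also have "\<dots> = 0" using \<open>y \<in> W\<close> bB unfolding W_def by simp
      finally show ?thesis .
    qed
    thus ?thesis unfolding W_def by simp
  qed
  obtain v where v: "v \<in> W" "norm v = 1" "M *v v = (v \<bullet> (M *v v)) *\<^sub>R v"
    using eig_exists[OF sym sW xW x(1) invW] by blast
  have vB: "v \<notin> B"
  proof
    assume "v \<in> B"
    hence "v \<bullet> v = 0" using v(1) unfolding W_def by simp
    thus False using v(2) by simp
  qed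
  show ?case
  proof (rule exI[of _ "insert v B"], intro conjI)
    show "finite (insert v B)" using B(1) by simp
    show "card (insert v B) = Suc k" using B(1,2) vB by simp
    show "pairwise orthogonal (insert v B)"
      using B(3) v(1) unfolding W_def pairwise_insert
      by (auto simp: orthogonal_def inner_commute)
    show "\<forall>b\<in>insert v B. norm b = 1 \<and> (\<exists>c. M *v b = c *\<^sub>R b)"
      using B(4) v by blast
  qed
qed

lemma spectral:
  fixes M :: "real^'n^'n"
  assumes sym: "transpose M = M"
  obtains Q :: "real^'n^'n" and mu where "orthogonal_matrix Q" "M = Q ** diag_mat mu ** transpose Q"
proof -
  obtain B where B: "finite B" "card B = CARD('n)" "pairwise orthogonal B"
    "\<forall>b\<in>B. norm b = 1 \<and> (\<exists>c. M *v b = c *\<^sub>R b)"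
    using eig_set[OF sym, of "CARD('n)"] by auto
  obtain e where e: "bij_betw e (UNIV::'n set) B"
    using finite_same_card_bij[of "UNIV::'n set" B] B(1,2) by auto
  have eB: "e i \<in> B" for i using e by (auto simp: bij_betw_def)
  have einj: "e i = e j \<Longrightarrow> i = j" for i j using e by (auto simp: bij_betw_def inj_def)
  define mu where "mu i = (SOME c. M *v e i = c *\<^sub>R e i)" for i
  have mu: "M *v e i = mu i *\<^sub>R e i" for i
    unfolding mu_def using B(4) eB[of i] by (metis (mono_tags, lifting) someI_ex)
  define Q :: "real^'n^'n" where "Q = (\<chi> i j. e j $ i)"
  have colQ: "column j Q = e j" for j unfolding Q_def column_def by (simp add: vec_eq_iff)
  have oQ: "orthogonal_matrix Q"
    unfolding orthogonal_matrix_orthonormal_columns colQ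
  proof (intro conjI allI impI)
    fix i show "norm (e i) = 1" using B(4) eB by blast
  next
    fix i j :: 'n assume "i \<noteq> j"
    hence "e i \<noteq> e j" using einj by blast
    thus "orthogonal (e i) (e j)" using B(3) eB unfolding pairwise_def by blast
  qed
  have MQ: "M ** Q = Q ** diag_mat mu"
  proof -
    have "(M ** Q) $ i $ j = (Q ** diag_mat mu) $ i $ j" for i j
    proof -
      have "(M ** Q) $ i $ j = (M *v e j) $ i"
        unfolding matrix_matrix_mult_def matrix_vector_mult_def Q_def by simp
      also have "\<dots> = mu j * e j $ i" using mu by simp
      also have "\<dots> = (Q ** diag_mat mu) $ i $ j"
        unfolding matrix_matrix_mult_def diag_mat_def Q_def
        by (simp add: if_distrib cong: if_cong)
      finally show ?thesis .
    qed
    thus ?thesis by (simp add: vec_eq_iff)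
  qed
  have "M = M ** (Q ** transpose Q)" using oQ unfolding orthogonal_matrix_def by simp
  also have "\<dots> = Q ** diag_mat mu ** transpose Q" by (simp add: matrix_mul_assoc MQ)
  finally show ?thesis using that oQ by blast
qed



lemma diag_mat_mul: "diag_mat a ** diag_mat b = diag_mat (\<lambda>i. a i * b i)"
  unfolding diag_mat_def matrix_matrix_mult_def
  by (simp add: vec_eq_iff if_distrib[of "\<lambda>x. x * _"] cong: if_cong)

lemma diag_mat_vec: "diag_mat a *v x = (\<chi> i. a i * x $ i)"
  unfolding diag_mat_def matrix_vector_mult_def
  by (simp add: vec_eq_iff if_distrib[of "\<lambda>x. x * _"] cong: if_cong)

lemma transpose_diag: "transpose (diag_mat a) = diag_mat a"
  unfolding diag_mat_def transpose_def by (simp add: vec_eq_iff)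

lemma det_diag: "det (diag_mat a) = prod a UNIV"
  by (subst det_diagonal) (auto simp: diag_mat_def)

lemma diag_one: "diag_mat (\<lambda>_. 1) = mat 1"
  unfolding diag_mat_def mat_def by (simp add: vec_eq_iff)

lemma mat_inv_eq:
  fixes A B :: "real^'n^'n"
  assumes "A ** B = mat 1" shows "matrix_inv A = B"
proof -
  have BA: "B ** A = mat 1" using assms matrix_left_right_inverse by blast
  have "\<exists>A'. A ** A' = mat 1 \<and> A' ** A = mat 1" using assms BA by blast
  hence C: "A ** matrix_inv A = mat 1 \<and> matrix_inv A ** A = mat 1"
    unfolding matrix_inv_def by (rule someI_ex)
  have "matrix_inv A = matrix_inv A ** (A ** B)" using assms by simp
  also have "\<dots> = B" using C by (simp add: matrix_mul_assoc)
  finally show ?thesis .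
qed

lemma mat_inv_props:
  fixes A :: "real^'n^'n"
  assumes "invertible A"
  shows "A ** matrix_inv A = mat 1" "matrix_inv A ** A = mat 1"
proof -
  have "\<exists>A'. A ** A' = mat 1 \<and> A' ** A = mat 1" using assms unfolding invertible_def .
  hence C: "A ** matrix_inv A = mat 1 \<and> matrix_inv A ** A = mat 1"
    unfolding matrix_inv_def by (rule someI_ex)
  thus "A ** matrix_inv A = mat 1" "matrix_inv A ** A = mat 1" by auto
qed

lemma posdef_invertible:
  fixes R :: "real^'n^'n"
  assumes "posdef R" shows "invertible R"
proof -
  have "\<forall>x. R *v x = 0 \<longrightarrow> x = 0"
  proof (intro allI impI)
    fix x assume "R *v x = 0"
    hence "x \<bullet> (R *v x) = 0" by simp
    thus "x = 0" using assms unfolding posdef_def by (metis less_irrefl)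
  qed
  thus ?thesis unfolding invertible_left_inverse matrix_left_invertible_ker by blast
qed

lemma inner_matvec: "x \<bullet> (A *v y) = (transpose A *v x) \<bullet> (y :: real^'n)"
  by (metis dot_lmul_matrix vector_transpose_matrix transpose_transpose)

lemma quad_conj:
  fixes Q D :: "real^'n^'n"
  shows "x \<bullet> ((Q ** D ** transpose Q) *v x) = (transpose Q *v x) \<bullet> (D *v (transpose Q *v x))"
  by (simp add: inner_matvec matrix_vector_mul_assoc[symmetric] )

lemma orth_props:
  fixes Q :: "real^'n^'n"
  assumes "orthogonal_matrix Q"
  shows "transpose Q ** Q = mat 1" "Q ** transpose Q = mat 1"
  using assms unfolding orthogonal_matrix_def by auto

lemma diag_quad: "y \<bullet> (diag_mat a *v y) = (\<Sum>i\<in>UNIV. a i * (y $ i)^2)"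
  by (simp add: diag_mat_vec inner_vec_def power2_eq_square mult.assoc mult.left_commute)

lemma posdef_diag_pos:
  fixes Q :: "real^'n^'n"
  assumes pd: "posdef S" and oQ: "orthogonal_matrix Q" and S: "S = Q ** diag_mat mu ** transpose Q"
  shows "mu i > 0"
proof -
  define x where "x = Q *v axis i 1"
  have tx: "transpose Q *v x = axis i 1" unfolding x_def
    using orth_props[OF oQ] by (simp add: matrix_vector_mul_assoc)
  have "x \<noteq> 0"
  proof
    assume "x = 0"
    hence "axis i (1::real) = 0" using tx by simp
    hence "axis i (1::real) $ i = 0" by simp
    thus False by (simp add: axis_def)
  qed
  hence "x \<bullet> (S *v x) > 0" using pd unfolding posdef_def by blast
  also have "x \<bullet> (S *v x) = mu i"
  proof -
    have e: "mu k * (axis i (1::real) $ k)^2 = (if k = i then mu i else 0)" for k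
      by (simp add: axis_def)
    show ?thesis unfolding S quad_conj tx diag_quad e by simp
  qed
  finally show ?thesis .
qed

lemma posdef_diag_conj:
  fixes Q :: "real^'n^'n"
  assumes oQ: "orthogonal_matrix Q" and pos: "\<And>i. mu i > 0"
  shows "posdef (Q ** diag_mat mu ** transpose Q)"
  unfolding posdef_def
proof (intro conjI allI impI)
  show "transpose (Q ** diag_mat mu ** transpose Q) = Q ** diag_mat mu ** transpose Q"
    by (simp add: matrix_transpose_mul transpose_diag matrix_mul_assoc)
  fix x :: "real^'n" assume "x \<noteq> 0"
  define y where "y = transpose Q *v x"
  have "Q *v y = x" unfolding y_def
    by (metis matrix_vector_mul_assoc matrix_vector_mul_lid orth_props(2)[OF oQ])
  hence "y \<noteq> 0" using \<open>x \<noteq> 0\<close> by auto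
  then obtain j where "y $ j \<noteq> 0" by (auto simp: vec_eq_iff)
  hence "0 < (\<Sum>i\<in>UNIV. mu i * (y $ i)^2)"
    by (intro sum_pos2[of _ j]) (auto intro!: mult_pos_pos mult_nonneg_nonneg less_imp_le[OF pos] pos)
  thus "0 < x \<bullet> ((Q ** diag_mat mu ** transpose Q) *v x)"
    unfolding quad_conj y_def[symmetric] diag_quad .
qed

lemma mul_column: "(A ** B) $ i $ j = (A *v column j B) $ i"
  by (simp add: matrix_matrix_mult_def matrix_vector_mult_def column_def)

lemma sqrt_unique:
  fixes R R0 :: "real^'n^'n"
  assumes pR: "posdef R" and pR0: "posdef R0" and eq: "R ** R = R0 ** R0"
  shows "R = R0"
proof -
  have sR: "transpose R = R" using pR unfolding posdef_def by simp
  obtain Q nu where oQ: "orthogonal_matrix Q" and RQ: "R = Q ** diag_mat nu ** transpose Q"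
    using spectral[OF sR] by blast
  have nupos: "nu j > 0" for j using posdef_diag_pos[OF pR oQ RQ] .
  have RQQ: "R ** Q = Q ** diag_mat nu"
    using orth_props[OF oQ] by (simp add: RQ matrix_mul_assoc[symmetric])
  have col: "R *v column j Q = nu j *\<^sub>R column j Q" for j
  proof -
    have "R *v column j Q = column j (R ** Q)"
      by (simp add: vec_eq_iff matrix_matrix_mult_def matrix_vector_mult_def column_def)
    also have "\<dots> = nu j *\<^sub>R column j Q" unfolding RQQ
      by (simp add: vec_eq_iff column_def matrix_matrix_mult_def diag_mat_def if_distrib cong: if_cong)
    finally show ?thesis .
  qed
  have col0: "R0 *v column j Q = nu j *\<^sub>R column j Q" for j
  proof -
    let ?v = "column j Q"
    define z where "z = R0 *v ?v - nu j *\<^sub>R ?v"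
    have "R0 *v z + nu j *\<^sub>R z = (R0 ** R0) *v ?v - (nu j)^2 *\<^sub>R ?v"
      unfolding z_def
      by (simp add: matrix_vector_mult_diff_distrib matrix_vector_mult_scaleR matrix_vector_mul_assoc
          power2_eq_square algebra_simps)
    also have "(R0 ** R0) *v ?v = R *v (R *v ?v)" by (simp add: eq[symmetric] matrix_vector_mul_assoc)
    also have "\<dots> = (nu j)^2 *\<^sub>R ?v" by (simp add: col matrix_vector_mult_scaleR power2_eq_square)
    finally have zz: "R0 *v z + nu j *\<^sub>R z = 0" by simp
    have "z = 0"
    proof (rule ccontr)
      assume "z \<noteq> 0"
      hence "z \<bullet> (R0 *v z) > 0" using pR0 unfolding posdef_def by blast
      moreover have "z \<bullet> z > 0" using \<open>z \<noteq> 0\<close> by simp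
      moreover have "z \<bullet> (R0 *v z) + nu j * (z \<bullet> z) = 0"
        using arg_cong[OF zz, of "\<lambda>u. z \<bullet> u"] by (simp add: inner_add_right)
      ultimately show False using nupos[of j] by (smt (verit) mult_pos_pos)
    qed
    thus ?thesis unfolding z_def by simp
  qed
  have "R ** Q = R0 ** Q"
    by (simp add: vec_eq_iff mul_column col col0)
  hence "R ** (Q ** transpose Q) = R0 ** (Q ** transpose Q)" by (simp add: matrix_mul_assoc)
  thus ?thesis using orth_props[OF oQ] by simp
qed

lemma sqrt_exists:
  fixes S :: "real^'n^'n"
  assumes pS: "posdef S"
  shows "\<exists>R. posdef R \<and> R ** R = S"
proof -
  have sS: "transpose S = S" using pS unfolding posdef_def by simp
  obtain Q mu where oQ: "orthogonal_matrix Q" and SQ: "S = Q ** diag_mat mu ** transpose Q"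
    using spectral[OF sS] by blast
  have mupos: "mu i > 0" for i using posdef_diag_pos[OF pS oQ SQ] .
  define R where "R = Q ** diag_mat (\<lambda>i. sqrt (mu i)) ** transpose Q"
  have "posdef R" unfolding R_def by (rule posdef_diag_conj[OF oQ]) (simp add: mupos)
  moreover have "R ** R = S"
  proof -
    have "R ** R = Q ** diag_mat (\<lambda>i. sqrt (mu i)) ** (transpose Q ** Q) ** diag_mat (\<lambda>i. sqrt (mu i)) ** transpose Q"
      unfolding R_def by (simp add: matrix_mul_assoc)
    also have "\<dots> = Q ** diag_mat mu ** transpose Q"
      using orth_props[OF oQ] mupos
      by (simp add: diag_mat_mul matrix_mul_assoc[symmetric] less_imp_le)
    finally show ?thesis using SQ by simp
  qed
  ultimately show ?thesis by blast
qed

lemma spd_sqrt_props: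
  fixes S :: "real^'n^'n"
  assumes "posdef S"
  shows "posdef (spd_sqrt S)" "spd_sqrt S ** spd_sqrt S = S"
proof -
  obtain R where R: "posdef R" "R ** R = S" using sqrt_exists[OF assms] by blast
  have "posdef (spd_sqrt S) \<and> spd_sqrt S ** spd_sqrt S = S"
    unfolding spd_sqrt_def
  proof (rule theI[of _ R])
    show "posdef R \<and> R ** R = S" using R by simp
    fix R' assume "posdef R' \<and> R' ** R' = S"
    thus "R' = R" using sqrt_unique[of R' R] R by simp
  qed
  thus "posdef (spd_sqrt S)" "spd_sqrt S ** spd_sqrt S = S" by auto
qed

lemma Basis_vec_range: "(Basis :: (real^'n) set) = range (\<lambda>i. axis i 1)"
  by (auto simp: Basis_vec_def)

lemma inj_axis1: "inj (\<lambda>i::'n::finite. axis i (1::real))"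
  by (auto simp: inj_def axis_eq_axis)

lemma prod_Basis_vec: "(\<Prod>b\<in>(Basis :: (real^'n) set). f b) = (\<Prod>i\<in>UNIV. f (axis i 1))"
  unfolding Basis_vec_range by (subst prod.reindex[OF inj_axis1]) simp

lemma sum_Basis_vec: "(\<Sum>b\<in>(Basis :: (real^'n) set). f b) = (\<Sum>i\<in>UNIV. f (axis i 1))"
  unfolding Basis_vec_range by (subst sum.reindex[OF inj_axis1]) simp

lemma emeasure_box_vec:
  fixes l u :: "real^'n"
  assumes "\<And>i. l $ i \<le> u $ i"
  shows "emeasure lborel (box l u) = (\<Prod>i\<in>UNIV. ennreal (u $ i - l $ i))"
proof -
  have "emeasure lborel (box l u) = ennreal (\<Prod>b\<in>Basis. (u - l) \<bullet> b)"
    using assms by (subst emeasure_lborel_box) (auto simp: Basis_vec_def inner_axis)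
  also have "\<dots> = ennreal (\<Prod>i\<in>UNIV. u $ i - l $ i)"
    by (simp add: prod_Basis_vec inner_axis)
  also have "\<dots> = (\<Prod>i\<in>UNIV. ennreal (u $ i - l $ i))"
    using assms by (simp add: prod_ennreal)
  finally show ?thesis .
qed

lemma lborel_eqI_vec:
  fixes M :: "(real^'n) measure"
  assumes "\<And>l u. (\<And>i. l $ i \<le> u $ i) \<Longrightarrow> emeasure M (box l u) = (\<Prod>i\<in>UNIV. ennreal (u $ i - l $ i))"
    and "sets M = sets borel"
  shows "lborel = M"
proof (rule lborel_eqI)
  fix l u :: "real^'n" assume le: "\<And>b. b \<in> Basis \<Longrightarrow> l \<bullet> b \<le> u \<bullet> b"
  have le': "l $ i \<le> u $ i" for i
  proof -
    have "axis i 1 \<in> (Basis :: (real^'n) set)" by (auto simp: Basis_vec_def)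
    thus ?thesis using le[of "axis i 1"] by (simp add: inner_axis)
  qed
  have "emeasure M (box l u) = emeasure lborel (box l u)"
    using assms(1)[OF le'] emeasure_box_vec[OF le'] by simp
  also have "\<dots> = (\<Prod>b\<in>Basis. (u - l) \<bullet> b)"
    using le by (rule emeasure_lborel_box)
  finally show "emeasure M (box l u) = (\<Prod>b\<in>Basis. (u - l) \<bullet> b)" .
qed (fact assms(2))

typedef 'a wo = "UNIV :: 'a set" by simp

instance wo :: (finite) finite
proof
  have "(UNIV :: 'a wo set) = Abs_wo ` UNIV"
    by (metis Rep_wo_inverse UNIV_I image_eqI subsetI subset_antisym)
  moreover have "finite (Abs_wo ` (UNIV :: 'a set))" by (rule finite_imageI) simp
  ultimately show "finite (UNIV :: 'a wo set)" by simp
qed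

instantiation wo :: (finite) linorder
begin
definition less_eq_wo :: "'a wo \<Rightarrow> 'a wo \<Rightarrow> bool" where "less_eq_wo x y \<longleftrightarrow> to_nat (Rep_wo x) \<le> to_nat (Rep_wo y)"
definition less_wo :: "'a wo \<Rightarrow> 'a wo \<Rightarrow> bool" where "less_wo x y \<longleftrightarrow> to_nat (Rep_wo x) < to_nat (Rep_wo y)"
instance
proof
  fix x y z :: "'a wo"
  show "(x < y) = (x \<le> y \<and> \<not> y \<le> x)" unfolding less_eq_wo_def less_wo_def by auto
  show "x \<le> x" unfolding less_eq_wo_def by simp
  show "x \<le> y \<Longrightarrow> y \<le> z \<Longrightarrow> x \<le> z" unfolding less_eq_wo_def by simp
  show "x \<le> y \<Longrightarrow> y \<le> x \<Longrightarrow> x = y" unfolding less_eq_wo_def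
    by (metis Rep_wo_inject antisym to_nat_split)
  show "x \<le> y \<or> y \<le> x" unfolding less_eq_wo_def by auto
qed
end

instance wo :: (finite) wellorder
proof
  fix P :: "'a wo \<Rightarrow> bool" and a
  assume H: "\<And>x. (\<And>y. y < x \<Longrightarrow> P y) \<Longrightarrow> P x"
  show "P a"
  proof (induction a rule: measure_induct_rule[of "\<lambda>x. to_nat (Rep_wo x)"])
    case (less x) thus ?case using H unfolding less_wo_def by blast
  qed
qed

definition phi :: "real^'n \<Rightarrow> real^('n wo)" where "phi x = (\<chi> j. x $ Rep_wo j)"
definition psi :: "real^('n wo) \<Rightarrow> real^'n" where "psi y = (\<chi> i. y $ Abs_wo i)"

lemma psi_phi[simp]: "psi (phi x) = x" by (simp add: phi_def psi_def Abs_wo_inverse vec_eq_iff)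
lemma phi_psi[simp]: "phi (psi y) = y" by (simp add: phi_def psi_def Rep_wo_inverse vec_eq_iff)

lemma inj_Abs_wo: "inj Abs_wo" by (metis Abs_wo_inverse UNIV_I injI)
lemma range_Abs_wo: "range Abs_wo = UNIV" by (metis Rep_wo_inverse UNIV_I image_eqI subsetI subset_antisym)

lemma sum_wo: "(\<Sum>j\<in>(UNIV::'n wo set). g j) = (\<Sum>i\<in>UNIV. g (Abs_wo i))"
  by (metis range_Abs_wo sum.reindex[OF inj_Abs_wo] comp_apply sum.cong)

lemma prod_wo: "(\<Prod>j\<in>(UNIV::'n wo set). g j) = (\<Prod>i\<in>UNIV. g (Abs_wo i))"
  by (metis range_Abs_wo prod.reindex[OF inj_Abs_wo] comp_apply prod.cong)

lemma phi_measurable[measurable]: "phi \<in> borel_measurable borel"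
proof -
  have "linear phi" by (rule linearI) (auto simp: phi_def vec_eq_iff)
  hence "continuous_on UNIV phi" using linear_conv_bounded_linear linear_continuous_on by blast
  thus ?thesis by (rule borel_measurable_continuous_onI)
qed

lemma psi_measurable[measurable]: "psi \<in> borel_measurable borel"
proof -
  have "linear psi" by (rule linearI) (auto simp: psi_def vec_eq_iff)
  hence "continuous_on UNIV psi" using linear_conv_bounded_linear linear_continuous_on by blast
  thus ?thesis by (rule borel_measurable_continuous_onI)
qed

lemma relabel: "distr (lborel :: (real^'n) measure) borel phi = lborel"
proof (rule lborel_eqI_vec[symmetric])
  fix l u :: "real^('n wo)" assume le: "\<And>i. l $ i \<le> u $ i"
  have pre: "phi -` box l u = box (psi l) (psi u)"
    by (auto simp: mem_box_cart phi_def psi_def Rep_wo_inverse)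
       (metis Abs_wo_cases Abs_wo_inverse UNIV_I)+
  have "emeasure (distr lborel borel phi) (box l u) = emeasure lborel (phi -` box l u)"
    by (subst emeasure_distr) auto
  also have "\<dots> = (\<Prod>i\<in>UNIV. ennreal (psi u $ i - psi l $ i))"
    unfolding pre using le by (intro emeasure_box_vec) (simp add: psi_def)
  also have "\<dots> = (\<Prod>i\<in>UNIV. ennreal (u $ i - l $ i))"
    by (simp add: prod_wo psi_def)
  finally show "emeasure (distr lborel borel phi) (box l u) = (\<Prod>i\<in>UNIV. ennreal (u $ i - l $ i))" .
qed simp

lemma nn_integral_relabel:
  assumes [measurable]: "f \<in> borel_measurable borel"
  shows "(\<integral>\<^sup>+y. f y \<partial>(lborel :: (real^('n wo)) measure)) = (\<integral>\<^sup>+x. f (phi (x::real^'n)) \<partial>lborel)"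
  by (subst relabel[symmetric]) (simp add: nn_integral_distr)

lemma matvec_measurable[measurable]: "(\<lambda>x. (A::real^'n^'m) *v x) \<in> borel_measurable borel"
proof -
  have "continuous_on UNIV (\<lambda>x. A *v x)"
    using matrix_vector_mul_linear linear_conv_bounded_linear linear_continuous_on by blast
  thus ?thesis by (rule borel_measurable_continuous_onI)
qed

lemma mv_cancel: "A ** B = mat 1 \<Longrightarrow> A *v (B *v x) = (x::real^'n)"
  by (metis matrix_vector_mul_assoc matrix_vector_mul_lid)

lemma orth_distr_wo:
  fixes Q :: "real^('m::{finite,wellorder})^('m::{finite,wellorder})"
  assumes oQ: "orthogonal_matrix Q"
  shows "distr lborel borel (\<lambda>x. Q *v x) = lborel"
proof (rule lborel_eqI_vec[symmetric])
  fix l u :: "real^('m::{finite,wellorder})" assume le: "\<And>i. l $ i \<le> u $ i"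
  have QQ: "transpose Q ** Q = mat 1" "Q ** transpose Q = mat 1" using oQ unfolding orthogonal_matrix_def by auto
  have pre: "(\<lambda>x. Q *v x) -` box l u = (\<lambda>x. transpose Q *v x) ` box l u"
  proof (intro set_eqI iffI)
    fix x assume "x \<in> (\<lambda>x. Q *v x) -` box l u"
    moreover have "x = transpose Q *v (Q *v x)" using mv_cancel[OF QQ(1)] by simp
    ultimately show "x \<in> (\<lambda>x. transpose Q *v x) ` box l u" by blast
  next
    fix x assume "x \<in> (\<lambda>x. transpose Q *v x) ` box l u"
    then obtain y where "y \<in> box l u" "x = transpose Q *v y" by blast
    moreover have "Q *v (transpose Q *v y) = y" using mv_cancel[OF QQ(2)] by simp
    ultimately show "x \<in> (\<lambda>x. Q *v x) -` box l u" by simp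
  qed
  have ot: "orthogonal_transformation (\<lambda>x. transpose Q *v x)"
    unfolding orthogonal_transformation_matrix
    by (simp add: matrix_vector_mul_linear matrix_of_matrix_vector_mul oQ orthogonal_matrix_transpose)
  have bor: "(\<lambda>x. Q *v x) -` box l u \<in> sets borel"
    using measurable_sets_borel[OF matvec_measurable[of Q], of "box l u"] by simp
  have "emeasure (distr lborel borel (\<lambda>x. Q *v x)) (box l u) = emeasure lborel ((\<lambda>x. Q *v x) -` box l u)"
    by (subst emeasure_distr) auto
  also have "\<dots> = emeasure lebesgue ((\<lambda>x. Q *v x) -` box l u)"
    using bor by simp
  also have "\<dots> = ennreal (measure lebesgue ((\<lambda>x. transpose Q *v x) ` box l u))"
    unfolding pre by (rule emeasure_eq_measure2) (rule measurable_orthogonal_image[OF ot lmeasurable_box])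
  also have "\<dots> = ennreal (measure lebesgue (box l u))"
    by (rule arg_cong[where f=ennreal], rule measure_orthogonal_image[OF ot lmeasurable_box])
  also have "\<dots> = emeasure lebesgue (box l u)"
    by (rule emeasure_eq_measure2[symmetric]) (rule lmeasurable_box)
  also have "\<dots> = emeasure lborel (box l u)" by simp
  also have "\<dots> = (\<Prod>i\<in>UNIV. ennreal (u $ i - l $ i))" using le by (rule emeasure_box_vec)
  finally show "emeasure (distr lborel borel (\<lambda>x. Q *v x)) (box l u) = (\<Prod>i\<in>UNIV. ennreal (u $ i - l $ i))" .
qed simp

lemma orth_inv:
  fixes Q :: "real^'n^'n"
  assumes oQ: "orthogonal_matrix Q" and [measurable]: "f \<in> borel_measurable borel"
  shows "(\<integral>\<^sup>+x. f (Q *v x) \<partial>lborel) = (\<integral>\<^sup>+x. f x \<partial>lborel)"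
proof -
  define Q' :: "real^('n wo)^('n wo)" where "Q' = (\<chi> a b. Q $ Rep_wo a $ Rep_wo b)"
  have comm: "phi (Q *v x) = Q' *v phi x" for x
    by (simp add: vec_eq_iff phi_def Q'_def matrix_vector_mult_def sum_wo Abs_wo_inverse)
  have oQ': "orthogonal_matrix Q'"
  proof -
    have QQ: "transpose Q ** Q = mat 1" using oQ unfolding orthogonal_matrix_def by auto
    have "(transpose Q' ** Q') $ a $ b = mat 1 $ a $ b" for a b
    proof -
      have "(transpose Q' ** Q') $ a $ b = (transpose Q ** Q) $ Rep_wo a $ Rep_wo b"
        by (simp add: Q'_def matrix_matrix_mult_def transpose_def sum_wo Abs_wo_inverse)
      also have "\<dots> = mat 1 $ a $ b" by (simp add: QQ mat_def Rep_wo_inject)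
      finally show ?thesis .
    qed
    thus ?thesis unfolding orthogonal_matrix by (simp add: vec_eq_iff)
  qed
  have "(\<integral>\<^sup>+x. f (Q *v x) \<partial>lborel) = (\<integral>\<^sup>+x. f (psi (Q' *v phi x)) \<partial>lborel)"
    by (simp add: comm[symmetric])
  also have "\<dots> = (\<integral>\<^sup>+y. f (psi (Q' *v y)) \<partial>lborel)"
    by (rule nn_integral_relabel[symmetric]) measurable
  also have "\<dots> = (\<integral>\<^sup>+y. f (psi y) \<partial>(distr lborel borel (\<lambda>x. Q' *v x)))"
    by (subst nn_integral_distr) auto
  also have "\<dots> = (\<integral>\<^sup>+y. f (psi y) \<partial>lborel)" by (simp add: orth_distr_wo[OF oQ'])
  also have "\<dots> = (\<integral>\<^sup>+x. f (psi (phi x)) \<partial>lborel)"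
    by (rule nn_integral_relabel) measurable
  finally show ?thesis by simp
qed

lemma stretch:
  fixes m :: "'n::finite \<Rightarrow> real"
  assumes m: "\<And>i. m i \<noteq> 0" and [measurable]: "f \<in> borel_measurable borel"
  shows "(\<integral>\<^sup>+x. f x \<partial>lborel) = ennreal \<bar>prod m UNIV\<bar> * (\<integral>\<^sup>+x. f ((\<chi> i. m i * x $ i) :: real^'n) \<partial>lborel)"
proof -
  define c where "c b = (\<Sum>i\<in>UNIV. m i * (b :: real^'n) $ i)" for b
  have cax: "c (axis j 1) = m j" for j
    by (simp add: c_def axis_def if_distrib[of "\<lambda>x. _ * x"] cong: if_cong)
  have c0: "\<And>j. j \<in> Basis \<Longrightarrow> c j \<noteq> 0" using m by (auto simp: Basis_vec_def cax)
  have T: "(\<Sum>j\<in>Basis. (c j * (x \<bullet> j)) *\<^sub>R j) = (\<chi> i. m i * x $ i)" for x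
  proof -
    have "(\<Sum>j\<in>Basis. (c j * (x \<bullet> j)) *\<^sub>R j) = (\<Sum>i\<in>UNIV. (m i * x $ i) *\<^sub>R axis i (1::real))"
      by (simp add: sum_Basis_vec cax inner_axis)
    also have "\<dots> = (\<chi> i. m i * x $ i)"
      by (simp add: vec_eq_iff sum_component axis_def if_distrib[of "\<lambda>x. _ * x"] cong: if_cong)
    finally show ?thesis .
  qed
  have P: "(\<Prod>j\<in>Basis. \<bar>c j\<bar>) = \<bar>prod m UNIV\<bar>"
    by (simp add: prod_Basis_vec cax abs_prod)
  have L: "lborel = density (distr lborel borel (\<lambda>x::real^'n. (\<chi> i. m i * x $ i))) (\<lambda>_. ennreal \<bar>prod m UNIV\<bar>)"
    using lborel_affine_euclidean[of c 0, OF c0] unfolding T P by simp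
  have mT[measurable]: "(\<lambda>x::real^'n. (\<chi> i. m i * x $ i)) \<in> borel_measurable borel"
  proof -
    have "(\<lambda>x::real^'n. (\<chi> i. m i * x $ i)) = (\<lambda>x. diag_mat m *v x)"
      by (simp add: fun_eq_iff vec_eq_iff diag_mat_def matrix_vector_mult_def if_distrib[of "\<lambda>x. x * _"] cong: if_cong)
    thus ?thesis by simp
  qed
  show ?thesis
    by (subst L) (simp add: nn_integral_density nn_integral_distr nn_integral_cmult)
qed

lemma abs_det_orth: "orthogonal_matrix Q \<Longrightarrow> \<bar>det (Q::real^'n^'n)\<bar> = 1"
  using det_orthogonal_matrix by fastforce

lemma cv_lin:
  fixes Q1 Q2 :: "real^'n^'n"
  assumes o1: "orthogonal_matrix Q1" and o2: "orthogonal_matrix Q2" and m: "\<And>i. m i > 0"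
    and [measurable]: "f \<in> borel_measurable borel"
  shows "(\<integral>\<^sup>+x. f x \<partial>lborel) = ennreal \<bar>det (Q1 ** diag_mat m ** Q2)\<bar> * (\<integral>\<^sup>+u. f ((Q1 ** diag_mat m ** Q2) *v u) \<partial>lborel)"
proof -
  have detT: "\<bar>det (Q1 ** diag_mat m ** Q2)\<bar> = \<bar>prod m UNIV\<bar>"
    by (simp add: det_mul det_diag abs_mult abs_det_orth[OF o1] abs_det_orth[OF o2])
  have "(\<integral>\<^sup>+u. f ((Q1 ** diag_mat m ** Q2) *v u) \<partial>lborel) = (\<integral>\<^sup>+u. f (Q1 *v (diag_mat m *v (Q2 *v u))) \<partial>lborel)"
    by (simp add: matrix_vector_mul_assoc matrix_mul_assoc)
  also have "\<dots> = (\<integral>\<^sup>+v. f (Q1 *v (diag_mat m *v v)) \<partial>lborel)"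
    by (rule orth_inv[OF o2]) measurable
  also have "\<dots> = (\<integral>\<^sup>+v. f (Q1 *v ((\<chi> i. m i * v $ i))) \<partial>lborel)"
    by (simp add: diag_mat_vec)
  finally have e1: "(\<integral>\<^sup>+u. f ((Q1 ** diag_mat m ** Q2) *v u) \<partial>lborel) = (\<integral>\<^sup>+v. f (Q1 *v ((\<chi> i. m i * v $ i))) \<partial>lborel)" .
  have "(\<integral>\<^sup>+x. f x \<partial>lborel) = (\<integral>\<^sup>+w. f (Q1 *v w) \<partial>lborel)"
    by (rule orth_inv[OF o1, symmetric]) measurable
  also have "\<dots> = ennreal \<bar>prod m UNIV\<bar> * (\<integral>\<^sup>+v. f (Q1 *v ((\<chi> i. m i * v $ i))) \<partial>lborel)"
    using m by (intro stretch) (metis less_irrefl, measurable)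
  finally show ?thesis unfolding e1 detT .
qed

lemma nn_prod_vec:
  fixes h :: "'n::finite \<Rightarrow> real \<Rightarrow> real"
  assumes meas[measurable]: "\<And>i. h i \<in> borel_measurable borel" and nn: "\<And>i t. 0 \<le> h i t"
  shows "(\<integral>\<^sup>+x. ennreal (\<Prod>i\<in>UNIV. h i ((x::real^'n) $ i)) \<partial>lborel) = (\<Prod>i\<in>UNIV. \<integral>\<^sup>+t. ennreal (h i t) \<partial>lborel)"
proof -
  define ix where "ix = inv (\<lambda>i::'n. axis i (1::real))"
  have ixa: "ix (axis i 1) = i" for i unfolding ix_def by (rule inv_f_f[OF inj_axis1])
  define f where "f b t = ennreal (h (ix b) t)" for b t
  have "(\<integral>\<^sup>+x. (\<Prod>b\<in>Basis. f b (x \<bullet> b)) \<partial>lborel) = (\<Prod>b\<in>(Basis::(real^'n) set). (\<integral>\<^sup>+x. f b x \<partial>lborel))"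
    by (rule nn_integral_lborel_prod) (auto simp: f_def nn)
  moreover have "(\<Prod>b\<in>Basis. f b ((x::real^'n) \<bullet> b)) = ennreal (\<Prod>i\<in>UNIV. h i (x $ i))" for x
    by (simp add: prod_Basis_vec f_def ixa inner_axis prod_ennreal nn)
  ultimately show ?thesis by (simp add: prod_Basis_vec f_def ixa)
qed

lemma nd_alt: "s > 0 \<Longrightarrow> normal_density m (sqrt s) x = exp (- (x - m)\<^sup>2 / (2 * s)) / sqrt (2 * pi * s)"
  by (simp add: normal_density_def)

lemma nn_nd: "sig > 0 \<Longrightarrow> (\<integral>\<^sup>+x. ennreal (normal_density m sig x) \<partial>lborel) = 1"
  by (subst nn_integral_eq_integral) (auto intro: integrable_normal_density simp: integral_normal_density)

lemma G0:
  assumes a: "a > 0"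
  shows "(\<integral>\<^sup>+x. ennreal (exp (- (a * (x - m)\<^sup>2))) \<partial>lborel) = ennreal (sqrt (pi / a))"
proof -
  define s where "s = 1 / (2 * a)"
  have s: "s > 0" using a by (simp add: s_def)
  have pt: "exp (- (a * (x - m)\<^sup>2)) = sqrt (pi / a) * normal_density m (sqrt s) x" for x
  proof -
    have "sqrt (pi / a) / sqrt (2 * pi * s) = 1"
      using a by (simp add: s_def real_sqrt_divide real_sqrt_mult field_simps)
    moreover have "- (x - m)\<^sup>2 / (2 * s) = - (a * (x - m)\<^sup>2)" using a by (simp add: s_def field_simps)
    ultimately show ?thesis using s a by (simp add: nd_alt)
  qed
  have "(\<integral>\<^sup>+x. ennreal (exp (- (a * (x - m)\<^sup>2))) \<partial>lborel) =
        (\<integral>\<^sup>+x. ennreal (sqrt (pi / a)) * ennreal (normal_density m (sqrt s) x) \<partial>lborel)"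
    using a by (simp add: pt ennreal_mult' ennreal_mult)
  also have "\<dots> = ennreal (sqrt (pi / a)) * (\<integral>\<^sup>+x. ennreal (normal_density m (sqrt s) x) \<partial>lborel)"
    by (rule nn_integral_cmult) measurable
  finally show ?thesis using s by (simp add: nn_nd)
qed

lemma G0':
  assumes a: "a > 0" and K: "K \<ge> 0" and pt: "\<And>x. f x = K * exp (- (a * (x - c)\<^sup>2))"
  shows "(\<integral>\<^sup>+x. ennreal (f x) \<partial>lborel) = ennreal (K * sqrt (pi / a))"
proof -
  have "(\<integral>\<^sup>+x. ennreal (f x) \<partial>lborel) = (\<integral>\<^sup>+x. ennreal K * ennreal (exp (- (a * (x - c)\<^sup>2))) \<partial>lborel)"
    using K by (simp add: pt ennreal_mult)
  also have "\<dots> = ennreal K * (\<integral>\<^sup>+x. ennreal (exp (- (a * (x - c)\<^sup>2))) \<partial>lborel)"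
    by (rule nn_integral_cmult) measurable
  finally show ?thesis using K a G0[OF a, of c] by (simp add: ennreal_mult)
qed

lemma conv1:
  assumes g: "g > 0" and sg: "sg > 0"
  shows "(\<integral>\<^sup>+u. ennreal (normal_density m (sqrt g) u * normal_density (l * u) (sqrt sg) w) \<partial>lborel)
       = ennreal (normal_density (l * m) (sqrt (l\<^sup>2 * g + sg)) w)"
proof -
  define D where "D = l\<^sup>2 * g + sg"
  have D: "D > 0" using g sg by (simp add: D_def add_nonneg_pos)
  define A where "A = D / (2 * g * sg)"
  have A: "A > 0" using D g sg by (simp add: A_def)
  define c where "c = (m * sg + l * w * g) / D"
  define K where "K = exp (- (w - l * m)\<^sup>2 / (2 * D)) / (sqrt (2 * pi * g) * sqrt (2 * pi * sg))"
  have ex: "- (u - m)\<^sup>2 / (2 * g) + - (w - l * u)\<^sup>2 / (2 * sg) = - (A * (u - c)\<^sup>2) + - (w - l * m)\<^sup>2 / (2 * D)" for u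
  proof -
    define gi where "gi = inverse g"
    define si where "si = inverse sg"
    define di where "di = inverse D"
    have 1: "g * gi = 1" using g by (simp add: gi_def)
    have 2: "sg * si = 1" using sg by (simp add: si_def)
    have 3: "D * di = 1" using D by (simp add: di_def)
    have 4: "D = l\<^sup>2 * g + sg" by (simp add: D_def)
    show ?thesis unfolding A_def c_def divide_inverse inverse_mult_distrib gi_def[symmetric] si_def[symmetric] di_def[symmetric]
      using 1 2 3 4 by algebra
  qed
  have pt: "normal_density m (sqrt g) u * normal_density (l * u) (sqrt sg) w = K * exp (- (A * (u - c)\<^sup>2))" for u
  proof -
    have "normal_density m (sqrt g) u * normal_density (l * u) (sqrt sg) w =
      exp (- (u - m)\<^sup>2 / (2 * g)) * exp (- (w - l * u)\<^sup>2 / (2 * sg)) / (sqrt (2 * pi * g) * sqrt (2 * pi * sg))"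
      using g sg by (simp add: nd_alt)
    also have "\<dots> = exp (- (u - m)\<^sup>2 / (2 * g) + - (w - l * u)\<^sup>2 / (2 * sg)) / (sqrt (2 * pi * g) * sqrt (2 * pi * sg))"
      by (simp only: exp_add)
    also have "\<dots> = exp (- (A * (u - c)\<^sup>2)) * exp (- (w - l * m)\<^sup>2 / (2 * D)) / (sqrt (2 * pi * g) * sqrt (2 * pi * sg))"
      unfolding ex by (simp only: exp_add)
    also have "\<dots> = K * exp (- (A * (u - c)\<^sup>2))" unfolding K_def by simp
    finally show ?thesis .
  qed
  have K: "K \<ge> 0" unfolding K_def using g sg by simp
  have "(\<integral>\<^sup>+u. ennreal (normal_density m (sqrt g) u * normal_density (l * u) (sqrt sg) w) \<partial>lborel) =
     ennreal (K * sqrt (pi / A))" by (rule G0'[OF A K pt])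
  also have "K * sqrt (pi / A) = normal_density (l * m) (sqrt D) w"
  proof -
    have "sqrt (pi / A) / (sqrt (2 * pi * g) * sqrt (2 * pi * sg)) = 1 / sqrt (2 * pi * D)"
      using g sg D unfolding A_def
      by (simp add: real_sqrt_divide real_sqrt_mult field_simps)
    hence "K * sqrt (pi / A) = exp (- (w - l * m)\<^sup>2 / (2 * D)) * (1 / sqrt (2 * pi * D))"
      unfolding K_def by (metis times_divide_eq_left times_divide_eq_right)
    thus ?thesis using D by (simp add: nd_alt)
  qed
  finally show ?thesis unfolding D_def .
qed

lemma chi1:
  assumes s: "s > 0" "s < 2"
  shows "(\<integral>\<^sup>+w. ennreal ((normal_density a (sqrt s) w)\<^sup>2 / normal_density 0 1 w) \<partial>lborel)
       = ennreal (exp (a\<^sup>2 / (2 - s)) / sqrt (s * (2 - s)))"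
proof -
  define A where "A = (2 - s) / (2 * s)"
  have A: "A > 0" using s by (simp add: A_def)
  define c where "c = 2 * a / (2 - s)"
  define K where "K = exp (a\<^sup>2 / (2 - s)) * sqrt (2 * pi) / (2 * pi * s)"
  have K: "K \<ge> 0" using s by (simp add: K_def)
  have s0: "s \<noteq> 0" "2 - s \<noteq> 0" using s by auto
  have ex: "2 * (- (w - a)\<^sup>2 / (2 * s)) - (- w\<^sup>2 / 2) = - (A * (w - c)\<^sup>2) + a\<^sup>2 / (2 - s)" for w
  proof -
    define q where "q = inverse s"
    define r where "r = inverse (2 - s)"
    have q: "s * q = 1" using s0 by (simp add: q_def)
    have r: "(2 - s) * r = 1" using s0 by (simp add: r_def)
    show ?thesis unfolding A_def c_def divide_inverse inverse_mult_distrib q_def[symmetric] r_def[symmetric]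
      using q r by algebra
  qed
  have pt: "(normal_density a (sqrt s) w)\<^sup>2 / normal_density 0 1 w = K * exp (- (A * (w - c)\<^sup>2))" for w
  proof -
    have "(normal_density a (sqrt s) w)\<^sup>2 / normal_density 0 1 w
       = (exp (- (w - a)\<^sup>2 / (2 * s)))\<^sup>2 / exp (- w\<^sup>2 / 2) * (sqrt (2 * pi) / (sqrt (2 * pi * s))\<^sup>2)"
      using s by (simp add: nd_alt[OF s(1)] std_normal_density_def field_simps power2_eq_square)
    also have "(exp (- (w - a)\<^sup>2 / (2 * s)))\<^sup>2 / exp (- w\<^sup>2 / 2) = exp (- (A * (w - c)\<^sup>2)) * exp (a\<^sup>2 / (2 - s))"
    proof -
      have "(exp (- (w - a)\<^sup>2 / (2 * s)))\<^sup>2 / exp (- w\<^sup>2 / 2) = exp (2 * (- (w - a)\<^sup>2 / (2 * s)) - (- w\<^sup>2 / 2))"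
        by (simp only: exp_diff power2_eq_square mult_2 exp_add)
      also have "\<dots> = exp (- (A * (w - c)\<^sup>2)) * exp (a\<^sup>2 / (2 - s))" unfolding ex by (simp only: exp_add)
      finally show ?thesis .
    qed
    also have "(sqrt (2 * pi * s))\<^sup>2 = 2 * pi * s" using s by simp
    finally show ?thesis unfolding K_def by (simp add: field_simps)
  qed
  have "(\<integral>\<^sup>+w. ennreal ((normal_density a (sqrt s) w)\<^sup>2 / normal_density 0 1 w) \<partial>lborel) = ennreal (K * sqrt (pi / A))"
    by (rule G0'[OF A K pt])
  also have "K * sqrt (pi / A) = exp (a\<^sup>2 / (2 - s)) / sqrt (s * (2 - s))"
  proof -
    have e1: "pi / A = 2 * pi * s / (2 - s)" using s by (simp add: A_def field_simps)
    have e3: "sqrt (2 * pi * s / (2 - s)) = sqrt (2 * pi) * sqrt s / sqrt (2 - s)"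
      by (simp add: real_sqrt_divide real_sqrt_mult)
    have e4: "2 * pi * s = sqrt (2 * pi) * sqrt (2 * pi) * (sqrt s * sqrt s)" using s by simp
    have aux: "P / (P * P * (q * q)) * (P * q / t) = 1 / (q * t)" if "P > 0" "q > 0" "t > 0" for P q t :: real
      using that by (simp add: field_simps)
    have "sqrt (2 * pi) / (2 * pi * s) * sqrt (pi / A) = sqrt (2 * pi) / (2 * pi * s) * (sqrt (2 * pi) * sqrt s / sqrt (2 - s))"
      by (simp only: e1 e3)
    also have "\<dots> = 1 / (sqrt s * sqrt (2 - s))"
      by (subst e4) (rule aux, use s in auto)
    finally have "sqrt (2 * pi) / (2 * pi * s) * sqrt (pi / A) = 1 / (sqrt s * sqrt (2 - s))" .
    hence "sqrt (2 * pi) / (2 * pi * s) * sqrt (pi / A) = 1 / sqrt (s * (2 - s))"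
      by (simp add: real_sqrt_mult)
    moreover have "K * sqrt (pi / A) = exp (a\<^sup>2 / (2 - s)) * (sqrt (2 * pi) / (2 * pi * s) * sqrt (pi / A))"
      unfolding K_def by (simp add: field_simps)
    ultimately show ?thesis by simp
  qed
  finally show ?thesis .
qed

lemma sqrt_prod: "sqrt (prod f A) = prod (\<lambda>i. sqrt (f i)) A"
  by (induction A rule: infinite_finite_induct) (auto simp: real_sqrt_mult)

lemma gauss_T:
  fixes T Ti :: "real^'n^'n"
  assumes TTi: "T ** Ti = mat 1" and TiT: "Ti ** T = mat 1" and d: "\<And>i. d i > 0"
  shows "gauss_density (T ** diag_mat d ** transpose T) (T *v mu) y =
         (\<Prod>i\<in>UNIV. normal_density (mu $ i) (sqrt (d i)) ((Ti *v y) $ i)) / \<bar>det T\<bar>"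
proof -
  let ?M = "T ** diag_mat d ** transpose T"
  let ?Mi = "transpose Ti ** diag_mat (\<lambda>i. 1 / d i) ** Ti"
  have TtTit: "transpose T ** transpose Ti = mat 1"
    by (metis TiT matrix_transpose_mul transpose_mat)
  have dd: "diag_mat d ** diag_mat (\<lambda>i. 1 / d i) = mat 1"
    using d by (simp add: diag_mat_mul diag_one[symmetric] less_imp_neq[symmetric])
  have "?M ** ?Mi = T ** diag_mat d ** (transpose T ** transpose Ti) ** diag_mat (\<lambda>i. 1 / d i) ** Ti"
    by (simp add: matrix_mul_assoc)
  also have "\<dots> = T ** (diag_mat d ** diag_mat (\<lambda>i. 1 / d i)) ** Ti"
    by (simp add: TtTit matrix_mul_assoc)
  also have "\<dots> = mat 1" by (simp add: dd TTi)
  finally have Mi: "matrix_inv ?M = ?Mi" by (rule mat_inv_eq)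
  define w where "w = Ti *v y"
  have yw: "y = T *v w" unfolding w_def by (simp add: mv_cancel[OF TTi])
  define v where "v = w - mu"
  have ymu: "y - T *v mu = T *v v" unfolding v_def yw by (simp add: matrix_vector_mult_diff_distrib)
  have quad: "(y - T *v mu) \<bullet> (matrix_inv ?M *v (y - T *v mu)) = (\<Sum>i\<in>UNIV. (v $ i)\<^sup>2 / d i)"
  proof -
    have "(T *v v) \<bullet> (?Mi *v (T *v v)) = (T *v v) \<bullet> (transpose Ti *v (diag_mat (\<lambda>i. 1 / d i) *v (Ti *v (T *v v))))"
      by (simp add: matrix_vector_mul_assoc matrix_mul_assoc)
    also have "\<dots> = (Ti *v (T *v v)) \<bullet> (diag_mat (\<lambda>i. 1 / d i) *v v)"
      by (subst inner_matvec) (simp only: transpose_transpose mv_cancel[OF TiT])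
    also have "\<dots> = v \<bullet> (diag_mat (\<lambda>i. 1 / d i) *v v)" by (simp add: mv_cancel[OF TiT])
    also have "\<dots> = (\<Sum>i\<in>UNIV. (v $ i)\<^sup>2 / d i)" by (simp add: diag_quad)
    finally show ?thesis unfolding ymu Mi .
  qed
  have detM: "det ?M = (det T)\<^sup>2 * prod d UNIV"
    by (simp add: det_mul det_diag power2_eq_square)
  have sq: "sqrt ((2 * pi) ^ CARD('n) * det ?M) = \<bar>det T\<bar> * (\<Prod>i\<in>UNIV. sqrt (2 * pi * d i))"
  proof -
    have "(2 * pi) ^ CARD('n) * det ?M = (det T)\<^sup>2 * (\<Prod>i\<in>UNIV. 2 * pi * d i)"
      by (simp add: detM prod.distrib prod_constant)
    thus ?thesis by (simp add: real_sqrt_mult sqrt_prod)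
  qed
  have ex: "exp (-(1/2) * (\<Sum>i\<in>UNIV. (v $ i)\<^sup>2 / d i)) = (\<Prod>i\<in>UNIV. exp (- (v $ i)\<^sup>2 / (2 * d i)))"
    by (simp add: exp_sum[symmetric] sum_distrib_left)
  have nd: "(\<Prod>i\<in>UNIV. normal_density (mu $ i) (sqrt (d i)) (w $ i)) =
        (\<Prod>i\<in>UNIV. exp (- (v $ i)\<^sup>2 / (2 * d i))) / (\<Prod>i\<in>UNIV. sqrt (2 * pi * d i))"
    using d by (simp add: nd_alt v_def prod_dividef)
  show ?thesis unfolding gauss_density_def quad sq ex nd w_def[symmetric] by simp
qed

lemma mm_sub_l: "(A::real^'n^'m) ** (B - C) = A ** B - A ** (C::real^'k^'n)"
  by (simp add: matrix_matrix_mult_def vec_eq_iff algebra_simps sum_subtractf)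

lemma mm_sub_r: "((B::real^'n^'m) - C) ** (A::real^'k^'n) = B ** A - C ** A"
  by (simp add: matrix_matrix_mult_def vec_eq_iff algebra_simps sum_subtractf)

lemma V_alg:
  fixes T Ti A S :: "real^'n^'n"
  assumes TiT: "Ti ** T = mat 1" and A_eq: "A = T ** diag_mat lam ** Ti"
    and S_eq: "S = T ** diag_mat (\<lambda>_. 1) ** transpose T"
  shows "S - A ** S ** transpose A = T ** diag_mat (\<lambda>i. 1 - (lam i)\<^sup>2) ** transpose T"
proof -
  have TtTit: "transpose T ** transpose Ti = mat 1"
    by (metis TiT matrix_transpose_mul transpose_mat)
  have tA: "transpose A = transpose Ti ** diag_mat lam ** transpose T"
    unfolding A_eq by (simp add: matrix_transpose_mul transpose_diag matrix_mul_assoc)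
  have "A ** S ** transpose A = T ** diag_mat lam ** (Ti ** T) ** (transpose T ** transpose Ti) ** diag_mat lam ** transpose T"
    unfolding tA unfolding A_eq S_eq by (simp add: diag_one matrix_mul_assoc)
  also have "\<dots> = T ** (diag_mat lam ** diag_mat lam) ** transpose T"
    by (simp add: TiT TtTit matrix_mul_assoc)
  also have "\<dots> = T ** diag_mat (\<lambda>i. (lam i)\<^sup>2) ** transpose T"
    by (simp add: diag_mat_mul power2_eq_square)
  finally have ASA: "A ** S ** transpose A = T ** diag_mat (\<lambda>i. (lam i)\<^sup>2) ** transpose T" .
  have "diag_mat (\<lambda>i. 1 - (lam i)\<^sup>2) = diag_mat (\<lambda>_. 1) - diag_mat (\<lambda>i. (lam i)\<^sup>2)"
    by (simp add: diag_mat_def vec_eq_iff)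
  hence "T ** diag_mat (\<lambda>i. 1 - (lam i)\<^sup>2) ** transpose T = T ** diag_mat (\<lambda>_. 1) ** transpose T - T ** diag_mat (\<lambda>i. (lam i)\<^sup>2) ** transpose T"
    by (simp add: mm_sub_l mm_sub_r)
  thus ?thesis unfolding ASA using S_eq by simp
qed

locale gsetup =
  fixes A S P :: "real^'n^'n" and lam :: "'n \<Rightarrow> real"
  assumes pS: "posdef S"
    and pV: "posdef (S - A ** S ** transpose A)"
    and oP: "orthogonal_matrix P"
    and hA: "matrix_inv (spd_sqrt S) ** A ** spd_sqrt S = P ** diag_mat lam ** transpose P"
begin

definition "R = spd_sqrt S"
definition "Ri = matrix_inv R"
definition "T = R ** P"
definition "Ti = transpose P ** Ri"
definition "V = S - A ** S ** transpose A"

lemma pR: "posdef R" and RR: "R ** R = S"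
  using spd_sqrt_props[OF pS] unfolding R_def by auto

lemma Rsym: "transpose R = R" using pR unfolding posdef_def by simp

lemma RRi: "R ** Ri = mat 1" and RiR: "Ri ** R = mat 1"
  using mat_inv_props[OF posdef_invertible[OF pR]] unfolding Ri_def by auto

lemma PP: "transpose P ** P = mat 1" "P ** transpose P = mat 1"
  using orth_props[OF oP] by auto

lemma TTi: "T ** Ti = mat 1"
proof -
  have "T ** Ti = R ** (P ** transpose P) ** Ri" unfolding T_def Ti_def by (simp add: matrix_mul_assoc)
  thus ?thesis by (simp add: PP RRi)
qed

lemma TiT: "Ti ** T = mat 1"
proof -
  have "Ti ** T = transpose P ** (Ri ** R) ** P" unfolding T_def Ti_def by (simp add: matrix_mul_assoc)
  thus ?thesis by (simp add: PP RiR)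
qed

lemma TtTit: "transpose T ** transpose Ti = mat 1"
  by (metis TiT matrix_transpose_mul transpose_mat)

lemma S_eq: "S = T ** diag_mat (\<lambda>_. 1) ** transpose T"
proof -
  have "T ** transpose T = R ** (P ** transpose P) ** transpose R"
    unfolding T_def by (simp add: matrix_transpose_mul matrix_mul_assoc)
  also have "\<dots> = S" by (simp add: PP Rsym RR)
  finally show ?thesis by (simp add: diag_one)
qed

lemma A_eq: "A = T ** diag_mat lam ** Ti"
proof -
  have "A = (R ** Ri) ** A ** (R ** Ri)" by (simp add: RRi)
  also have "\<dots> = R ** (Ri ** A ** R) ** Ri" by (simp add: matrix_mul_assoc)
  also have "\<dots> = R ** (P ** diag_mat lam ** transpose P) ** Ri"
    using hA unfolding Ri_def R_def by simp
  also have "\<dots> = T ** diag_mat lam ** Ti" unfolding T_def Ti_def by (simp add: matrix_mul_assoc)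
  finally show ?thesis .
qed

lemma V_eq: "V = T ** diag_mat (\<lambda>i. 1 - (lam i)\<^sup>2) ** transpose T"
  unfolding V_def by (rule V_alg[OF TiT A_eq S_eq])

lemma lam_bound: "(lam i)\<^sup>2 < 1"
proof -
  define y where "y = transpose Ti *v axis i 1"
  have ty: "transpose T *v y = axis i 1" unfolding y_def by (simp only: mv_cancel[OF TtTit])
  have "y \<noteq> 0"
  proof
    assume "y = 0"
    hence "axis i (1::real) = 0" using ty by simp
    hence "axis i (1::real) $ i = 0" by simp
    thus False by (simp add: axis_def)
  qed
  hence "0 < y \<bullet> (V *v y)" using pV unfolding posdef_def V_def by blast
  also have "y \<bullet> (V *v y) = 1 - (lam i)\<^sup>2"
  proof -
    have e: "(1 - (lam k)\<^sup>2) * (axis i (1::real) $ k)\<^sup>2 = (if k = i then 1 - (lam i)\<^sup>2 else 0)" for k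
      by (simp add: axis_def)
    show ?thesis unfolding V_eq quad_conj ty diag_quad e by simp
  qed
  finally show ?thesis by simp
qed

lemma T_decomp: "\<exists>Q1 Q2 m. orthogonal_matrix Q1 \<and> orthogonal_matrix Q2 \<and> (\<forall>i. m i > 0) \<and> T = Q1 ** diag_mat m ** Q2"
proof -
  obtain Q nu where oQ: "orthogonal_matrix Q" and RQ: "R = Q ** diag_mat nu ** transpose Q"
    using spectral[OF Rsym] by blast
  have "nu i > 0" for i using posdef_diag_pos[OF pR oQ RQ] .
  moreover have "orthogonal_matrix (transpose Q ** P)"
    by (intro orthogonal_matrix_mul oP) (simp add: orthogonal_matrix_transpose oQ)
  moreover have "T = Q ** diag_mat nu ** (transpose Q ** P)" unfolding T_def RQ by (simp add: matrix_mul_assoc)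
  ultimately show ?thesis using oQ by blast
qed

lemma detT: "det T \<noteq> 0"
proof
  assume "det T = 0"
  hence "det (T ** Ti) = 0" by (simp add: det_mul)
  thus False by (simp add: TTi)
qed

lemma cvT:
  assumes [measurable]: "f \<in> borel_measurable borel"
  shows "(\<integral>\<^sup>+z. f z \<partial>lborel) = ennreal \<bar>det T\<bar> * (\<integral>\<^sup>+u. f (T *v u) \<partial>lborel)"
proof -
  obtain Q1 Q2 m where "orthogonal_matrix Q1" "orthogonal_matrix Q2" "\<forall>i. m i > 0" and T: "T = Q1 ** diag_mat m ** Q2"
    using T_decomp by blast
  thus ?thesis using cv_lin[of Q1 Q2 m f] by simp
qed

lemma cvTi:
  assumes [measurable]: "g \<in> borel_measurable borel"
  shows "(\<integral>\<^sup>+z. g (Ti *v z) \<partial>lborel) = ennreal \<bar>det T\<bar> * (\<integral>\<^sup>+u. g u \<partial>lborel)"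
  using cvT[of "\<lambda>z. g (Ti *v z)"] by (simp add: mv_cancel[OF TiT])

end

lemma matvec_nth_measurable[measurable]: "(\<lambda>x. ((M::real^'n^'m) *v x) $ i) \<in> borel_measurable borel"
  using measurable_compose[OF matvec_measurable[of M] borel_measurable_nth[of i]] by (simp add: o_def)

context gsetup
begin

lemma int_prod_Ti:
  fixes h :: "'n \<Rightarrow> real \<Rightarrow> real"
  assumes hm[measurable]: "\<And>i. h i \<in> borel_measurable borel" and hn: "\<And>i t. 0 \<le> h i t" and c: "c \<ge> 0"
  shows "(\<integral>\<^sup>+z. ennreal (c * (\<Prod>i\<in>UNIV. h i ((Ti *v z) $ i))) \<partial>lborel)
       = ennreal (\<bar>det T\<bar> * c) * (\<Prod>i\<in>UNIV. \<integral>\<^sup>+t. ennreal (h i t) \<partial>lborel)"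
proof -
  have "(\<integral>\<^sup>+z. ennreal (c * (\<Prod>i\<in>UNIV. h i ((Ti *v z) $ i))) \<partial>lborel)
      = ennreal \<bar>det T\<bar> * (\<integral>\<^sup>+u. ennreal (c * (\<Prod>i\<in>UNIV. h i (u $ i))) \<partial>lborel)"
    by (rule cvTi[of "\<lambda>u. ennreal (c * (\<Prod>i\<in>UNIV. h i (u $ i)))"]) measurable
  also have "(\<integral>\<^sup>+u. ennreal (c * (\<Prod>i\<in>UNIV. h i (u $ i))) \<partial>lborel)
      = (\<integral>\<^sup>+u. ennreal c * ennreal (\<Prod>i\<in>UNIV. h i (u $ i)) \<partial>lborel)"
    using c hn by (simp add: ennreal_mult prod_nonneg)
  also have "\<dots> = ennreal c * (\<integral>\<^sup>+u. ennreal (\<Prod>i\<in>UNIV. h i (u $ i)) \<partial>lborel)"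
    by (rule nn_integral_cmult) measurable
  also have "(\<integral>\<^sup>+u. ennreal (\<Prod>i\<in>UNIV. h i ((u::real^'n) $ i)) \<partial>lborel) = (\<Prod>i\<in>UNIV. \<integral>\<^sup>+t. ennreal (h i t) \<partial>lborel)"
    by (rule nn_prod_vec[OF hm hn])
  finally show ?thesis using c by (simp add: ennreal_mult mult.assoc)
qed

lemma lam_pow: "0 < k \<Longrightarrow> (lam i) ^ (2 * k) < 1"
proof -
  assume k: "0 < k"
  have "(lam i) ^ (2 * k) = ((lam i)\<^sup>2) ^ k" by (simp add: power_mult)
  also have "\<dots> < 1" using lam_bound[of i] k by (simp add: power_less_one_iff)
  finally show ?thesis .
qed

definition F :: "nat \<Rightarrow> real^'n \<Rightarrow> real^'n \<Rightarrow> real" where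
  "F l x y = (\<Prod>i\<in>UNIV. normal_density (lam i ^ Suc l * (Ti *v x) $ i) (sqrt (1 - lam i ^ (2 * Suc l))) ((Ti *v y) $ i)) / \<bar>det T\<bar>"

lemma base: "gauss_density V (A *v x) y = F 0 x y"
proof -
  have Ax: "A *v x = T *v (\<chi> i. lam i * (Ti *v x) $ i)"
  proof -
    have "A *v x = (T ** diag_mat lam ** Ti) *v x" by (metis A_eq)
    thus ?thesis by (simp add: matrix_vector_mul_assoc[symmetric] diag_mat_vec)
  qed
  have d: "1 - (lam i)\<^sup>2 > 0" for i using lam_bound[of i] by simp
  show ?thesis unfolding V_eq Ax F_def
    by (subst gauss_T[OF TTi TiT d]) (simp add: power2_eq_square)
qed

lemma pow_step: "(l0::real)\<^sup>2 * (1 - l0 ^ (2 * Suc k)) + (1 - l0\<^sup>2) = 1 - l0 ^ (2 * Suc (Suc k))"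
proof -
  have "2 * Suc (Suc k) = 2 + 2 * Suc k" by simp
  hence "l0 ^ (2 * Suc (Suc k)) = l0\<^sup>2 * l0 ^ (2 * Suc k)" by (simp only: power_add)
  thus ?thesis by (simp add: algebra_simps)
qed

lemma trans_closed: "trans_dens A V (Suc l) x y = F l x y"
proof (induction l arbitrary: x y)
  case 0
  show ?case using base by simp
next
  case (Suc l)
  define d where "d = \<bar>det T\<bar>"
  have dpos: "d > 0" using detT by (simp add: d_def)
  define a where "a i = lam i ^ Suc l * (Ti *v x) $ i" for i
  define s where "s i = 1 - lam i ^ (2 * Suc l)" for i
  define sg where "sg i = 1 - (lam i)\<^sup>2" for i
  define w where "w = Ti *v y"
  have spos: "s i > 0" for i using lam_pow[of "Suc l" i] by (simp add: s_def)
  have sgpos: "sg i > 0" for i using lam_bound[of i] by (simp add: sg_def)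
  define h where "h i t = normal_density (a i) (sqrt (s i)) t * normal_density (lam i * t) (sqrt (sg i)) (w $ i)" for i t
  have hm[measurable]: "h i \<in> borel_measurable borel" for i
    unfolding h_def normal_density_def by measurable
  have hn: "0 \<le> h i t" for i t unfolding h_def by simp
  have pt: "F l x z * F 0 z y = (1 / d\<^sup>2) * (\<Prod>i\<in>UNIV. h i ((Ti *v z) $ i))" for z
    unfolding F_def h_def a_def s_def sg_def w_def d_def
    by (simp add: prod.distrib[symmetric] power2_eq_square field_simps)
  have "trans_dens A V (Suc (Suc l)) x y = (LINT z|lborel. trans_dens A V (Suc l) x z * gauss_density V (A *v z) y)"
    by simp
  also have "\<dots> = (LINT z|lborel. (1 / d\<^sup>2) * (\<Prod>i\<in>UNIV. h i ((Ti *v z) $ i)))"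
    by (simp add: Suc.IH base pt)
  also have "\<dots> = enn2real (\<integral>\<^sup>+z. ennreal ((1 / d\<^sup>2) * (\<Prod>i\<in>UNIV. h i ((Ti *v z) $ i))) \<partial>lborel)"
    by (rule integral_eq_nn_integral) (measurable, intro AE_I2, simp add: hn prod_nonneg)
  also have "(\<integral>\<^sup>+z. ennreal ((1 / d\<^sup>2) * (\<Prod>i\<in>UNIV. h i ((Ti *v z) $ i))) \<partial>lborel)
      = ennreal (d * (1 / d\<^sup>2)) * (\<Prod>i\<in>UNIV. \<integral>\<^sup>+t. ennreal (h i t) \<partial>lborel)"
    unfolding d_def by (rule int_prod_Ti[OF hm hn]) simp
  also have "(\<Prod>i\<in>UNIV. \<integral>\<^sup>+t. ennreal (h i t) \<partial>lborel)
      = (\<Prod>i\<in>UNIV. ennreal (normal_density (lam i * a i) (sqrt ((lam i)\<^sup>2 * s i + sg i)) (w $ i)))"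
    unfolding h_def by (intro prod.cong refl conv1 spos sgpos)
  also have "\<dots> = ennreal (\<Prod>i\<in>UNIV. normal_density (lam i * a i) (sqrt ((lam i)\<^sup>2 * s i + sg i)) (w $ i))"
    by (simp add: prod_ennreal)
  finally have "trans_dens A V (Suc (Suc l)) x y = d * (1 / d\<^sup>2) * (\<Prod>i\<in>UNIV. normal_density (lam i * a i) (sqrt ((lam i)\<^sup>2 * s i + sg i)) (w $ i))"
    using dpos by (simp add: ennreal_mult[symmetric] prod_nonneg)
  also have "\<dots> = F (Suc l) x y"
    unfolding F_def a_def s_def sg_def w_def d_def[symmetric] pow_step
    using dpos by (simp add: power2_eq_square field_simps)
  finally show ?case .
qed

end

context gsetup
begin

lemma pi_eq: "gauss_density S 0 y = (\<Prod>i\<in>UNIV. normal_density 0 1 ((Ti *v y) $ i)) / \<bar>det T\<bar>"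
proof -
  have "gauss_density S 0 y = gauss_density (T ** diag_mat (\<lambda>_. 1) ** transpose T) (T *v 0) y"
    by (subst S_eq[symmetric]) simp
  also have "\<dots> = (\<Prod>i\<in>UNIV. normal_density 0 1 ((Ti *v y) $ i)) / \<bar>det T\<bar>"
    by (subst gauss_T[OF TTi TiT]) simp_all
  finally show ?thesis .
qed

lemma chi_closed:
  fixes x :: "real^'n" and l :: nat
  defines "a \<equiv> \<lambda>i. lam i ^ Suc l * (Ti *v x) $ i"
    and "s \<equiv> \<lambda>i. 1 - lam i ^ (2 * Suc l)"
  shows "chi_sq A V S x (Suc l) = ennreal ((\<Prod>i\<in>UNIV. exp ((a i)\<^sup>2 / (2 - s i)) / sqrt (s i * (2 - s i))) - 1)"
proof -
  define d where "d = \<bar>det T\<bar>"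
  have dpos: "d > 0" using detT by (simp add: d_def)
  have spos: "s i > 0" for i using lam_pow[of "Suc l" i] by (simp add: s_def)
  have s2: "s i < 2" for i using zero_le_even_power[of "2 * Suc l" "lam i"] by (simp add: s_def)
  define f where "f i t = normal_density (a i) (sqrt (s i)) t" for i t
  define g where "g t = normal_density 0 1 t" for t :: real
  have fm[measurable]: "f i \<in> borel_measurable borel" for i unfolding f_def by measurable
  have gm[measurable]: "g \<in> borel_measurable borel" unfolding g_def by measurable
  have fn: "0 \<le> f i t" for i t unfolding f_def by simp
  have gpos: "0 < g t" for t unfolding g_def by (simp add: normal_density_pos)
  define Kf where "Kf y = (1 / d) * (\<Prod>i\<in>UNIV. f i ((Ti *v y) $ i))" for y
  define Pf where "Pf y = (1 / d) * (\<Prod>i\<in>UNIV. g ((Ti *v y) $ i))" for y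
  have Kfm[measurable]: "Kf \<in> borel_measurable borel" unfolding Kf_def by measurable
  have Pfm[measurable]: "Pf \<in> borel_measurable borel" unfolding Pf_def by measurable
  have Kn: "0 \<le> Kf y" for y unfolding Kf_def using dpos fn by (simp add: prod_nonneg)
  have Ppos: "0 < Pf y" for y unfolding Pf_def using dpos gpos by (simp add: prod_pos)
  have K_eq: "trans_dens A V (Suc l) x y = Kf y" for y
    unfolding trans_closed F_def Kf_def f_def a_def s_def d_def by simp
  have P_eq: "gauss_density S 0 y = Pf y" for y
    unfolding pi_eq Pf_def g_def d_def by simp
  have chi: "chi_sq A V S x (Suc l) = (\<integral>\<^sup>+y. ennreal ((Kf y - Pf y)\<^sup>2 / Pf y) \<partial>lborel)"
    unfolding chi_sq_def K_eq P_eq by simp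
  have IK: "(\<integral>\<^sup>+y. ennreal (Kf y) \<partial>lborel) = 1"
  proof -
    have "(\<integral>\<^sup>+y. ennreal (Kf y) \<partial>lborel) = ennreal (d * (1 / d)) * (\<Prod>i\<in>UNIV. \<integral>\<^sup>+t. ennreal (f i t) \<partial>lborel)"
      unfolding Kf_def d_def by (rule int_prod_Ti[OF fm fn]) simp
    also have "(\<Prod>i\<in>UNIV. \<integral>\<^sup>+t. ennreal (f i t) \<partial>lborel) = 1"
      unfolding f_def using spos by (simp add: nn_nd)
    finally show ?thesis using dpos by simp
  qed
  have IP: "(\<integral>\<^sup>+y. ennreal (Pf y) \<partial>lborel) = 1"
  proof -
    have "(\<integral>\<^sup>+y. ennreal (Pf y) \<partial>lborel) = ennreal (d * (1 / d)) * (\<Prod>i\<in>(UNIV::'n set). \<integral>\<^sup>+t. ennreal (g t) \<partial>lborel)"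
      unfolding Pf_def d_def by (rule int_prod_Ti[where h="\<lambda>_. g"]) (simp_all add: less_imp_le[OF gpos])
    also have "(\<Prod>i\<in>(UNIV::'n set). \<integral>\<^sup>+t. ennreal (g t) \<partial>lborel) = 1"
      unfolding g_def by (simp add: nn_nd)
    finally show ?thesis using dpos by simp
  qed
  define E where "E = (\<Prod>i\<in>UNIV. exp ((a i)\<^sup>2 / (2 - s i)) / sqrt (s i * (2 - s i)))"
  have E0: "E \<ge> 0" unfolding E_def using spos s2 by (intro prod_nonneg) (simp add: less_imp_le)
  have IKP: "(\<integral>\<^sup>+y. ennreal ((Kf y)\<^sup>2 / Pf y) \<partial>lborel) = ennreal E"
  proof -
    have pt: "(Kf y)\<^sup>2 / Pf y = (1 / d) * (\<Prod>i\<in>UNIV. (f i ((Ti *v y) $ i))\<^sup>2 / g ((Ti *v y) $ i))" for y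
    proof -
      have "(Kf y)\<^sup>2 / Pf y = (1 / d) * ((\<Prod>i\<in>UNIV. f i ((Ti *v y) $ i))\<^sup>2 / (\<Prod>i\<in>UNIV. g ((Ti *v y) $ i)))"
        unfolding Kf_def Pf_def using dpos by (simp add: power2_eq_square field_simps)
      thus ?thesis by (simp add: prod_dividef prod_power_distrib)
    qed
    have "(\<integral>\<^sup>+y. ennreal ((Kf y)\<^sup>2 / Pf y) \<partial>lborel) = ennreal (d * (1 / d)) * (\<Prod>i\<in>UNIV. \<integral>\<^sup>+t. ennreal ((f i t)\<^sup>2 / g t) \<partial>lborel)"
      unfolding pt d_def
      by (rule int_prod_Ti) (measurable, auto intro!: divide_nonneg_pos gpos)
    also have "(\<Prod>i\<in>UNIV. \<integral>\<^sup>+t. ennreal ((f i t)\<^sup>2 / g t) \<partial>lborel)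
      = (\<Prod>i\<in>UNIV. ennreal (exp ((a i)\<^sup>2 / (2 - s i)) / sqrt (s i * (2 - s i))))"
      unfolding f_def g_def by (intro prod.cong refl chi1 spos s2)
    also have "\<dots> = ennreal E" unfolding E_def using spos s2
      by (subst prod_ennreal) (auto simp: less_imp_le)
    finally show ?thesis using dpos by simp
  qed
  have pw: "ennreal ((Kf y - Pf y)\<^sup>2 / Pf y) + ennreal (2 * Kf y) = ennreal ((Kf y)\<^sup>2 / Pf y) + ennreal (Pf y)" for y
  proof -
    have p: "Pf y \<noteq> 0" using Ppos[of y] by simp
    have "(Kf y - Pf y)\<^sup>2 / Pf y + 2 * Kf y = (Kf y)\<^sup>2 / Pf y + Pf y"
      using p by (simp add: field_simps power2_eq_square)
    moreover have "0 \<le> (Kf y - Pf y)\<^sup>2 / Pf y" "0 \<le> 2 * Kf y" "0 \<le> (Kf y)\<^sup>2 / Pf y" "0 \<le> Pf y"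
      using Ppos[of y] Kn[of y] by (auto intro: divide_nonneg_pos)
    ultimately show ?thesis by (metis ennreal_plus)
  qed
  have "chi_sq A V S x (Suc l) + 2 = (\<integral>\<^sup>+y. ennreal ((Kf y - Pf y)\<^sup>2 / Pf y) \<partial>lborel) + (\<integral>\<^sup>+y. ennreal (2 * Kf y) \<partial>lborel)"
  proof -
    have "(\<integral>\<^sup>+y. ennreal (2 * Kf y) \<partial>lborel) = (\<integral>\<^sup>+y. 2 * ennreal (Kf y) \<partial>lborel)"
      using Kn by (simp add: ennreal_mult)
    also have "\<dots> = 2 * (\<integral>\<^sup>+y. ennreal (Kf y) \<partial>lborel)" by (rule nn_integral_cmult) measurable
    finally show ?thesis unfolding chi IK by simp
  qed
  also have "\<dots> = (\<integral>\<^sup>+y. ennreal ((Kf y - Pf y)\<^sup>2 / Pf y) + ennreal (2 * Kf y) \<partial>lborel)"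
    by (rule nn_integral_add[symmetric]) measurable
  also have "\<dots> = (\<integral>\<^sup>+y. ennreal ((Kf y)\<^sup>2 / Pf y) + ennreal (Pf y) \<partial>lborel)"
    by (simp add: pw)
  also have "\<dots> = (\<integral>\<^sup>+y. ennreal ((Kf y)\<^sup>2 / Pf y) \<partial>lborel) + (\<integral>\<^sup>+y. ennreal (Pf y) \<partial>lborel)"
    by (rule nn_integral_add) measurable
  also have "\<dots> = ennreal (E + 1)" unfolding IKP IP using E0 by (metis ennreal_1 ennreal_plus zero_le_one)
  finally have eq: "chi_sq A V S x (Suc l) + 2 = ennreal (E + 1)" .
  have "chi_sq A V S x (Suc l) \<noteq> \<top>"
  proof
    assume "chi_sq A V S x (Suc l) = \<top>"
    thus False using eq by simp
  qed
  then obtain c where c: "c \<ge> 0" "chi_sq A V S x (Suc l) = ennreal c" by (cases "chi_sq A V S x (Suc l)") auto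
  have "ennreal (c + 2) = ennreal (E + 1)" using eq c
    by (metis ennreal_numeral ennreal_plus zero_le_numeral)
  hence "c + 2 = E + 1" using c E0 by (subst (asm) ennreal_inj) auto
  hence "c = E - 1" by simp
  thus ?thesis using c unfolding E_def by simp
qed

end

theorem proposition4p29:
  fixes A S P :: "real^'n^'n" and lam :: "'n \<Rightarrow> real" and x :: "real^'n" and l :: nat
  assumes "posdef S"
    and "posdef (S - A ** S ** transpose A)"
    and "A ** S = S ** transpose A"
    and "orthogonal_matrix P"
    and "matrix_inv (spd_sqrt S) ** A ** spd_sqrt S = P ** diag_mat lam ** transpose P"
    and "l \<ge> 1"
  shows "chi_sq A (S - A ** S ** transpose A) S x l =
    ennreal (exp (\<Sum>i\<in>UNIV. (((transpose P *v (matrix_inv (spd_sqrt S) *v x)) $ i)^2 * lam i ^ (2*l)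
                               / (1 + lam i ^ (2*l))))
             / sqrt (\<Prod>i\<in>UNIV. 1 - lam i ^ (4*l)) - 1)"
proof -
  interpret gsetup A S P lam using assms(1,2,4,5) by unfold_locales
  obtain k where l: "l = Suc k" using assms(6) by (cases l) auto
  define u where "u = transpose P *v (matrix_inv (spd_sqrt S) *v x)"
  have u: "Ti *v x = u" unfolding u_def Ti_def Ri_def R_def by (simp add: matrix_vector_mul_assoc)
  have Veq: "S - A ** S ** transpose A = V" by (simp add: V_def)
  have c: "chi_sq A V S x (Suc k) = ennreal ((\<Prod>i\<in>UNIV. exp ((lam i ^ Suc k * (Ti *v x) $ i)\<^sup>2 / (2 - (1 - lam i ^ (2 * Suc k))))
          / sqrt ((1 - lam i ^ (2 * Suc k)) * (2 - (1 - lam i ^ (2 * Suc k))))) - 1)"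
    by (rule chi_closed)
  have e1: "(lam i ^ l * u $ i)\<^sup>2 / (2 - (1 - lam i ^ (2 * l))) = (u $ i)\<^sup>2 * lam i ^ (2 * l) / (1 + lam i ^ (2 * l))" for i
    by (simp add: power_mult_distrib power_mult[symmetric] mult.commute)
  have e2: "(1 - lam i ^ (2 * l)) * (2 - (1 - lam i ^ (2 * l))) = 1 - lam i ^ (4 * l)" for i
  proof -
    have "lam i ^ (4 * l) = lam i ^ (2 * l) * lam i ^ (2 * l)"
      by (simp add: power_add[symmetric])
    thus ?thesis by (simp add: algebra_simps)
  qed
  have "(\<Prod>i\<in>UNIV. exp ((lam i ^ l * u $ i)\<^sup>2 / (2 - (1 - lam i ^ (2 * l))))
          / sqrt ((1 - lam i ^ (2 * l)) * (2 - (1 - lam i ^ (2 * l)))))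
      = exp (\<Sum>i\<in>UNIV. (u $ i)\<^sup>2 * lam i ^ (2 * l) / (1 + lam i ^ (2 * l))) / sqrt (\<Prod>i\<in>UNIV. 1 - lam i ^ (4 * l))"
    unfolding e1 e2 by (simp add: prod_dividef exp_sum sqrt_prod)
  thus ?thesis unfolding Veq using c unfolding l[symmetric] u u_def by simp
qed

end
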